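(* Let $q$ be a prime power, $n\ge 1$ with $\gcd(n,q)=1$, and $\lambda\in\mathbb{F}_q^{*}$ of multiplicative order $t$. Let $\mathcal{C}=\mathcal{I}_i$ be an irreducible $\lambda$-constacyclic code of length $n$ and dimension $k$ over $\mathbb{F}_q$ corresponding to the $q$-cyclotomic coset $C_{1+t\alpha_i}=\{1+t\alpha_i,(1+t\alpha_i)q,\dots,(1+t\alpha_i)q^{k-1}\}$ modulo $tn$ (so $k=d_i$). Then $$N_{\langle\rho\rangle}(\mathcal{C}^{*})=\frac{(q^k-1)\gcd(1+t\alpha_i,n)}{tn}.$$ Moreover, the number of distinct nonzero Hamming weights of codewords of $\mathcal{C}$ is at most $N_{\langle\rho\rangle}(\mathcal{C}^{*})$, with equality if and only if for any two nonzero codewords $c_1,c_2\in\mathcal{C}$ of the same Hamming weight there exists an integer $j$ with $\rho^{j}(c_1)=c_2$.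
   Context: Standing setup: $q$ is a prime power, $n$ a positive integer with $\gcd(n,q)=1$, $\lambda\in\mathbb{F}_q^{*}$ has multiplicative order $t$ (so $t\mid q-1$). $\mathcal{R}=\mathbb{F}_q[x]/\langle x^n-\lambda\rangle$; vectors $(c_0,\dots,c_{n-1})\in\mathbb{F}_q^n$ are identified with $c_0+c_1x+\dots+c_{n-1}x^{n-1}\in\mathcal{R}$, and a $\lambda$-constacyclic code of length $n$ is an ideal of $\mathcal{R}$. Let $\zeta$ be a primitive $tn$-th root of unity in an extension $\mathbb{F}_{q^m}$ with $\zeta^n=\lambda$, so $x^n-\lambda=\prod_{i=0}^{n-1}(x-\zeta^{1+ti})$. The set $\mathcal{S}=\{1+ti:0\le i\le n-1\}$ (residues mod $tn$) is partitioned into the distinct $q$-cyclotomic cosets modulo $tn$, $C_{1+t\alpha_j}=\{(1+t\alpha_j)q^{h}\bmod tn: h\ge 0\}$, $j=0,\dots,s$, with $0=\alpha_0<\alpha_1<\dots<\alpha_s\le n-1$ and $d_j=|C_{1+t\alpha_j}|$. Let $m_j(x)=\prod_{h\in C_{1+t\alpha_j}}(x-\zeta^{h})$ (irreducible over $\mathbb{F}_q$), and let $\mathcal{I}_j$ be the ideal of $\mathcal{R}$ generated by $(x^n-\lambda)/m_j(x)$; this is an irreducible (minimal) $\lambda$-constacyclic code of dimension $d_j$, said to correspond to the coset $C_{1+t\alpha_j}$, and $\mathcal{R}=\mathcal{I}_0\oplus\dots\oplus\mathcal{I}_s$. The cyclic shift $\rho:\mathcal{R}\to\mathcal{R}$ is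 $\rho(c(x))=xc(x)$, i.e. $(c_0,\dots,c_{n-1})\mapsto(\lambda c_{n-1},c_0,\dots,c_{n-2})$; $\langle\rho\rangle$ is the cyclic group it generates, of order $tn$, acting on every $\lambda$-constacyclic code. For $b\in\mathbb{F}_q^{*}$, $\sigma_b(c)=bc$, and $M=\{\sigma_b:b\in\mathbb{F}_q^{*}\}$; $\langle\rho,M\rangle$ is the group generated by $\rho$ and $M$. For a code $\mathcal{C}$, $\mathcal{C}^{*}=\mathcal{C}\setminus\{0\}$, and for a group $G$ acting on a finite set $X$, $N_G(X)$ denotes the number of $G$-orbits on $X$. *)

theory Defs
  imports "HOL-Computational_Algebra.Polynomial"
begin

definition mult_order :: "'a::field \<Rightarrow> nat" where
  "mult_order a = (LEAST d. d > 0 \<and> a ^ d = 1)"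

definition field_embedding :: "('a::field \<Rightarrow> 'b::field) \<Rightarrow> bool" where
  "field_embedding e \<longleftrightarrow> inj e \<and> e 0 = 0 \<and> e 1 = 1 \<and>
     (\<forall>a b. e (a + b) = e a + e b) \<and> (\<forall>a b. e (a * b) = e a * e b)"

definition cyc_coset :: "nat \<Rightarrow> nat \<Rightarrow> nat \<Rightarrow> nat set" where
  "cyc_coset q N a = {(a * q ^ h) mod N | h. True}"

definition xn_minus :: "nat \<Rightarrow> 'a::field \<Rightarrow> 'a poly" where
  "xn_minus n lam = monom 1 n - [:lam:]"

text \<open>The ideal of R generated by g (for g dividing x^n - lambda, as a set of reduced
  representatives): all g*f mod (x^n - lambda).\<close>
definition ideal_gen :: "nat \<Rightarrow> 'a::field \<Rightarrow> 'a poly \<Rightarrow> 'a poly set" where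
  "ideal_gen n lam g = {(g * f) mod xn_minus n lam | f. True}"

text \<open>The constacyclic shift rho(c) = x c and its inverse x^{-1} c = lambda^{-1} x^{n-1} c in R.\<close>
definition rho :: "nat \<Rightarrow> 'a::field \<Rightarrow> 'a poly \<Rightarrow> 'a poly" where
  "rho n lam c = (monom 1 1 * c) mod xn_minus n lam"

definition rho_inv :: "nat \<Rightarrow> 'a::field \<Rightarrow> 'a poly \<Rightarrow> 'a poly" where
  "rho_inv n lam c = (monom (inverse lam) (n - 1) * c) mod xn_minus n lam"

definition rho_pow :: "nat \<Rightarrow> 'a::field \<Rightarrow> int \<Rightarrow> 'a poly \<Rightarrow> 'a poly" where
  "rho_pow n lam j = (if j \<ge> 0 then rho n lam ^^ nat j else rho_inv n lam ^^ nat (- j))"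

definition rho_orbit :: "nat \<Rightarrow> 'a::field \<Rightarrow> 'a poly \<Rightarrow> 'a poly set" where
  "rho_orbit n lam c = {rho_pow n lam j c | j. True}"

definition num_rho_orbits :: "nat \<Rightarrow> 'a::field \<Rightarrow> 'a poly set \<Rightarrow> nat" where
  "num_rho_orbits n lam X = card (rho_orbit n lam ` X)"

definition hweight :: "'a::zero poly \<Rightarrow> nat" where
  "hweight c = card {i. coeff c i \<noteq> 0}"

end

theory Submission
  imports Defs
begin



context
  fixes e :: "'a::field \<Rightarrow> 'b::field"
  assumes fe: "field_embedding e"
begin

lemma fe_0[simp]: "e 0 = 0" and fe_1[simp]: "e 1 = 1"
  and fe_add[simp]: "e (x + y) = e x + e y" and fe_mult[simp]: "e (x * y) = e x * e y"
  and fe_inj: "inj e"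
  using fe by (auto simp: field_embedding_def)

lemma fe_eq_iff[simp]: "e x = e y \<longleftrightarrow> x = y"
  using fe_inj by (auto dest: injD)

lemma fe_eq0[simp]: "e x = 0 \<longleftrightarrow> x = 0"
  using fe_eq_iff[of x 0] by simp

lemma fe_uminus[simp]: "e (- x) = - e x"
proof -
  have "e (- x) + e x = 0" by (metis fe_add fe_0 left_minus)
  thus ?thesis by (simp add: eq_neg_iff_add_eq_0)
qed

lemma fe_diff[simp]: "e (x - y) = e x - e y"
  by (metis diff_conv_add_uminus fe_add fe_uminus)

lemma fe_sum: "e (sum f A) = (\<Sum>x\<in>A. e (f x))"
  by (induction A rule: infinite_finite_induct) auto

lemma fe_power[simp]: "e (x ^ n) = e x ^ n"
  by (induction n) auto

lemma fe_of_nat[simp]: "e (of_nat n) = of_nat n"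
  by (induction n) auto

lemma coeff_map_fe[simp]: "coeff (map_poly e p) n = e (coeff p n)"
  by (simp add: coeff_map_poly)

lemma map_fe_add[simp]: "map_poly e (p + q) = map_poly e p + map_poly e q"
  by (intro poly_eqI) simp

lemma map_fe_diff[simp]: "map_poly e (p - q) = map_poly e p - map_poly e q"
  by (intro poly_eqI) simp

lemma map_fe_mult[simp]: "map_poly e (p * q) = map_poly e p * map_poly e q"
  by (intro poly_eqI) (simp add: coeff_mult fe_sum)

lemma map_fe_monom[simp]: "map_poly e (monom c n) = monom (e c) n"
  by (simp add: map_poly_monom)

lemma map_fe_const[simp]: "map_poly e [:c:] = [:e c:]"
  by (intro poly_eqI) (simp add: coeff_pCons split: nat.splits)

lemma map_fe_1[simp]: "map_poly e 1 = 1"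
  by simp

lemma map_fe_power[simp]: "map_poly e (p ^ n) = map_poly e p ^ n"
  by (induction n) auto

lemma map_fe_eq0[simp]: "map_poly e p = 0 \<longleftrightarrow> p = 0"
  by (simp add: poly_eq_iff)

lemma degree_map_fe[simp]: "degree (map_poly e p) = degree p"
  by (rule degree_map_poly) simp

lemma map_fe_dvd: "map_poly e u dvd map_poly e v \<longleftrightarrow> u dvd v"
proof
  assume "u dvd v" thus "map_poly e u dvd map_poly e v"
    by (metis dvdE dvdI map_fe_mult)
next
  assume d: "map_poly e u dvd map_poly e v"
  show "u dvd v"
  proof (cases "u = 0")
    case True
    with d show ?thesis by simp
  next
    case False
    have "v = u * (v div u) + v mod u" by simp
    hence "map_poly e v = map_poly e u * map_poly e (v div u) + map_poly e (v mod u)"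
      by (metis map_fe_add map_fe_mult)
    hence "map_poly e u dvd map_poly e (v mod u)"
      using d by (metis dvd_add_right_iff dvd_triv_left)
    moreover have "v mod u = 0 \<or> degree (v mod u) < degree u"
      using False degree_mod_less by blast
    ultimately have "v mod u = 0"
      using dvd_imp_degree_le[of "map_poly e u" "map_poly e (v mod u)"] False by force
    thus ?thesis by (simp add: mod_eq_0_iff_dvd)
  qed
qed

end



lemma finite_field_fermat:
  fixes x :: "'a::{finite,field}"
  assumes "x \<noteq> 0"
  shows "x ^ (card (UNIV::'a set) - 1) = 1"
proof -
  let ?U = "UNIV - {0::'a}"
  have bij: "bij_betw (\<lambda>y. x * y) ?U ?U"
    by (rule bij_betw_byWitness[where f'="\<lambda>y. inverse x * y"]) (use assms in auto)
  have "(\<Prod>y\<in>?U. x * y) = (\<Prod>y\<in>?U. y)"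
    using prod.reindex_bij_betw[OF bij, of "\<lambda>y. y"] by simp
  moreover have "(\<Prod>y\<in>?U. x * y) = x ^ card ?U * (\<Prod>y\<in>?U. y)"
    by (simp add: prod.distrib)
  moreover have "(\<Prod>y\<in>?U. y) \<noteq> 0" by simp
  moreover have "card ?U = card (UNIV::'a set) - 1" by (simp add: card_Diff_subset)
  ultimately show ?thesis by simp
qed

lemma prod_roots_dvd:
  fixes f :: "nat \<Rightarrow> 'b::field"
  assumes "finite K" "inj_on f K" "\<forall>h\<in>K. poly p (f h) = 0"
  shows "(\<Prod>h\<in>K. [:- f h, 1:]) dvd p"
  using assms
proof (induction K arbitrary: p rule: finite_induct)
  case empty thus ?case by simp
next
  case (insert b A)
  from insert have "(\<Prod>h\<in>A. [:- f h, 1:]) dvd p" by auto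
  then obtain s where s: "p = (\<Prod>h\<in>A. [:- f h, 1:]) * s" by blast
  have "poly (\<Prod>h\<in>A. [:- f h, 1:]) (f b) \<noteq> 0"
    using insert.prems insert.hyps by (auto simp: poly_prod inj_on_def)
  moreover have "poly p (f b) = 0" using insert.prems by auto
  ultimately have "poly s (f b) = 0" by (simp add: s)
  then obtain s' where s': "s = [:- f b, 1:] * s'" using poly_eq_0_iff_dvd by blast
  have "p = ([:- f b, 1:] * (\<Prod>h\<in>A. [:- f h, 1:])) * s'" by (simp only: s s' mult_ac)
  thus ?case unfolding prod.insert[OF insert.hyps(1,2)] by (rule dvdI)
qed

lemma degree_prod_roots:
  fixes f :: "nat \<Rightarrow> 'b::field"
  shows "finite K \<Longrightarrow> degree (\<Prod>h\<in>K. [:- f h, 1:]) = card K"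
  by (subst degree_prod_eq_sum_degree) auto

lemma roots_card_le:
  fixes f :: "nat \<Rightarrow> 'b::field"
  assumes "r \<noteq> 0" "inj_on f K" "\<forall>h\<in>K. poly r (f h) = 0"
  shows "card K \<le> degree r"
proof -
  have "card K = card (f ` K)" using assms(2) by (simp add: card_image)
  also have "\<dots> \<le> card {x. poly r x = 0}"
    using assms by (intro card_mono poly_roots_finite) auto
  also have "\<dots> \<le> degree r" by (rule card_poly_roots_bound[OF assms(1)])
  finally show ?thesis .
qed

lemma pow_mod_eq:
  fixes z :: "'b::comm_monoid_mult"
  assumes "z ^ N = 1" "x mod N = y mod N"
  shows "z ^ x = z ^ y"
proof -
  have gen: "z ^ w = z ^ (w mod N)" for w
  proof -
    have "z ^ w = z ^ (N * (w div N) + w mod N)" by (metis div_mult_mod_eq mult.commute)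
    also have "\<dots> = (z ^ N) ^ (w div N) * z ^ (w mod N)" by (simp only: power_add power_mult)
    finally show ?thesis using assms(1) by simp
  qed
  show ?thesis using gen[of x] gen[of y] assms(2) by simp
qed




locale cset =
  fixes lam :: "'a::{finite,field}"
    and emb :: "'a \<Rightarrow> 'b::field"
    and zeta :: 'b
    and n t \<alpha> :: nat
    and m :: "'a poly"
    and q :: nat
  assumes q_def: "q = card (UNIV :: 'a set)"
    and n_pos: "n \<ge> 1"
    and coprime_nq: "coprime n q"
    and lam_nz: "lam \<noteq> 0"
    and t_def: "t = mult_order lam"
    and emb: "field_embedding emb"
    and zeta_N: "zeta ^ (t * n) = 1"
    and zeta_prim: "\<forall>j. 0 < j \<and> j < t * n \<longrightarrow> zeta ^ j \<noteq> 1"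
    and zeta_n: "zeta ^ n = emb lam"
    and alpha_lt: "\<alpha> < n"
    and m_def: "map_poly emb m = (\<Prod>h\<in>cyc_coset q (t * n) (1 + t * \<alpha>). [:- (zeta ^ h), 1:])"
begin

abbreviation "N \<equiv> t * n"
abbreviation "a \<equiv> 1 + t * \<alpha>"
abbreviation "K \<equiv> cyc_coset q N a"
abbreviation "X \<equiv> xn_minus n lam"

lemma q_ge2: "q \<ge> 2"
proof -
  have "{0::'a, 1} \<subseteq> UNIV" by simp
  hence "card {0::'a,1} \<le> q" unfolding q_def by (intro card_mono) auto
  thus ?thesis by simp
qed

lemma lam_q: "lam ^ (q - 1) = 1"
  using finite_field_fermat[OF lam_nz] q_def by simp

lemma t_props: "t > 0" "lam ^ t = 1" "\<And>d. 0 < d \<Longrightarrow> lam ^ d = 1 \<Longrightarrow> t \<le> d"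
proof -
  have ex: "q - 1 > 0 \<and> lam ^ (q - 1) = 1" using q_ge2 lam_q by auto
  show "t > 0" "lam ^ t = 1"
    using LeastI[of "\<lambda>d. d > 0 \<and> lam ^ d = 1", OF ex] by (auto simp: t_def mult_order_def)
  show "\<And>d. 0 < d \<Longrightarrow> lam ^ d = 1 \<Longrightarrow> t \<le> d"
    by (auto simp: t_def mult_order_def intro: Least_le)
qed

lemma lam_pow_mod: "x mod t = y mod t \<Longrightarrow> lam ^ x = lam ^ y"
  by (rule pow_mod_eq[OF t_props(2)])

lemma t_dvd: "t dvd q - 1"
proof -
  have "lam ^ ((q - 1) mod t) = 1"
    using lam_pow_mod[of "(q - 1) mod t" "q - 1"] lam_q by simp
  hence "(q - 1) mod t = 0"
  proof (rule contrapos_pp)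
    assume "(q - 1) mod t \<noteq> 0"
    moreover have "(q - 1) mod t < t" using t_props(1) by simp
    ultimately show "lam ^ ((q - 1) mod t) \<noteq> 1" using t_props(3)[of "(q - 1) mod t"] by auto
  qed
  thus ?thesis by auto
qed

lemma q_mod_t: "q mod t = 1 mod t"
proof -
  have "q mod t = (q - 1 + 1) mod t" using q_ge2 by simp
  also have "\<dots> = ((q - 1) mod t + 1) mod t" by (simp add: mod_Suc_eq)
  also have "\<dots> = 1 mod t" using t_dvd by simp
  finally show ?thesis .
qed

lemma coprime_qt: "coprime q t"
proof -
  obtain s where "q - 1 = t * s" using t_dvd by blast
  hence "q = t * s + 1" using q_ge2 by simp
  hence "gcd t q = 1" using gcd_add_mult[of t s 1] by (simp add: mult.commute)
  thus ?thesis by (simp add: coprime_iff_gcd_eq_1 gcd.commute)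
qed

lemma coprime_qN: "coprime q N"
  using coprime_qt coprime_nq by (simp add: coprime_commute)

lemma N_pos: "N > 0" using t_props(1) n_pos by simp

lemma coprime_at: "coprime a t"
proof -
  have "gcd t (\<alpha> * t + 1) = 1" using gcd_add_mult[of t \<alpha> 1] by simp
  thus ?thesis by (simp add: coprime_iff_gcd_eq_1 gcd.commute mult.commute)
qed

lemma K_elem: "h \<in> K \<longleftrightarrow> (\<exists>s. h = (a * q ^ s) mod N)"
  by (auto simp: cyc_coset_def)

lemma K_less: "h \<in> K \<Longrightarrow> h < N"
  using N_pos by (auto simp: cyc_coset_def)

lemma K_finite: "finite K"
proof -
  have "K \<subseteq> {..<N}" using K_less by auto
  thus "finite K" using finite_subset by blast
qed

lemma a_in_K: "a mod N \<in> K"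
  unfolding K_elem by (rule exI[of _ 0]) simp

lemma zeta_mod: "zeta ^ x = zeta ^ (x mod N)"
  by (rule pow_mod_eq[OF zeta_N]) simp

lemma zeta_1_iff: "zeta ^ x = 1 \<longleftrightarrow> N dvd x"
proof
  assume "zeta ^ x = 1"
  hence "zeta ^ (x mod N) = 1" using zeta_mod by simp
  hence "x mod N = 0" using zeta_prim N_pos by (meson mod_less_divisor not_gr0)
  thus "N dvd x" by auto
next
  assume "N dvd x" thus "zeta ^ x = 1" using zeta_N by (auto simp: power_mult)
qed

lemma zeta_inj: "inj_on (\<lambda>h. zeta ^ h) {..<N}"
proof (rule inj_onI)
  fix x y assume xy: "x \<in> {..<N}" "y \<in> {..<N}" "zeta ^ x = zeta ^ y"
  have *: "x = y" if xy: "x < N" "y < N" "zeta ^ x = zeta ^ y" "x \<le> y" for x y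
  proof -
    have "zeta ^ y = zeta ^ x * zeta ^ (y - x)" using xy(4) by (simp add: power_add[symmetric])
    moreover have "zeta \<noteq> 0" using zeta_N N_pos by (metis power_0_left zero_neq_one not_gr0)
    ultimately have "zeta ^ (y - x) = 1" using xy(3) by (simp add: mult_cancel_left1)
    hence "N dvd y - x" using zeta_1_iff by blast
    have "y - x = 0"
    proof (rule ccontr)
      assume "y - x \<noteq> 0"
      hence "N \<le> y - x" using \<open>N dvd y - x\<close> by (simp add: dvd_imp_le)
      thus False using xy by simp
    qed
    thus "x = y" using xy(4) by simp
  qed
  show "x = y"
  proof (cases "x \<le> y")
    case True thus ?thesis using *[of x y] xy by auto
  next
    case False thus ?thesis using *[of y x] xy by auto
  qed
qed

lemma K_inj: "inj_on (\<lambda>h. zeta ^ h) K"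
  using zeta_inj K_less by (meson inj_on_subset lessThan_iff subsetI)

lemma K_dvd_iff: "h \<in> K \<Longrightarrow> N dvd h * e \<longleftrightarrow> N dvd a * e"
proof -
  assume "h \<in> K"
  then obtain s where hs: "h = (a * q ^ s) mod N" using K_elem by blast
  have "N dvd h * e \<longleftrightarrow> N dvd a * q ^ s * e"
    unfolding hs by (simp add: dvd_eq_mod_eq_0 mod_mult_left_eq)
  also have "\<dots> \<longleftrightarrow> N dvd (a * e) * q ^ s" by (simp only: mult.assoc mult.commute mult.left_commute)
  also have "\<dots> \<longleftrightarrow> N dvd a * e"
    by (rule coprime_dvd_mult_left_iff) (use coprime_qN in \<open>simp add: coprime_commute\<close>)
  finally show ?thesis .
qed

lemma K_root: "h \<in> K \<Longrightarrow> (zeta ^ h) ^ n = emb lam"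
proof -
  assume "h \<in> K"
  then obtain s where hs: "h = (a * q ^ s) mod N" using K_elem by blast
  have "(zeta ^ h) ^ n = (zeta ^ n) ^ (a * q ^ s)"
    unfolding hs zeta_mod[of "a * q ^ s", symmetric] by (simp add: power_mult[symmetric] mult.commute)
  also have "\<dots> = emb (lam ^ (a * q ^ s))" using zeta_n fe_power[OF emb] by simp
  also have "lam ^ (a * q ^ s) = lam ^ 1"
  proof (rule lam_pow_mod)
    have "q ^ s mod t = (q mod t) ^ s mod t" by (simp add: power_mod)
    also have "\<dots> = (1 mod t) ^ s mod t" using q_mod_t by simp
    also have "\<dots> = 1 mod t" by (simp add: power_mod)
    finally have 1: "q ^ s mod t = 1 mod t" .
    have 2: "a mod t = 1 mod t" using mod_mult_self1[of 1 \<alpha> t] by (simp add: mult.commute)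
    have "(a * q ^ s) mod t = ((a mod t) * (q ^ s mod t)) mod t" by (simp add: mod_mult_eq)
    also have "\<dots> = ((1 mod t) * (1 mod t)) mod t" using 1 2 by simp
    also have "\<dots> = 1 mod t" by (simp add: mod_mult_eq)
    finally show "(a * q ^ s) mod t = 1 mod t" .
  qed
  finally show ?thesis by simp
qed

end



lemma card_deg_less:
  assumes "k \<ge> 1"
  shows "card {r::'a::{finite,field} poly. degree r < k} = card (UNIV::'a set) ^ k"
proof -
  let ?L = "{xs::'a list. set xs \<subseteq> UNIV \<and> length xs = k}"
  have inj: "inj_on Poly ?L"
  proof (rule inj_onI)
    fix xs ys assume "xs \<in> ?L" "ys \<in> ?L" "Poly xs = Poly ys"
    hence l: "length xs = length ys" and c: "\<And>i. nth_default 0 xs i = nth_default 0 ys i"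
      by (auto dest: arg_cong[where f="\<lambda>p. coeff p _"])
    show "xs = ys"
    proof (rule nth_equalityI[OF l])
      fix i assume "i < length xs"
      thus "xs ! i = ys ! i" using c[of i] l by (simp add: nth_default_def)
    qed
  qed
  have eq: "{r::'a poly. degree r < k} = Poly ` ?L"
  proof (intro set_eqI iffI)
    fix r :: "'a poly" assume "r \<in> {r. degree r < k}"
    hence d: "degree r < k" by simp
    have len: "length (coeffs r) \<le> k"
      using d by (cases "r = 0") (auto simp: length_coeffs_degree)
    let ?xs = "coeffs r @ replicate (k - length (coeffs r)) 0"
    have "r = Poly ?xs" by simp
    moreover have "?xs \<in> ?L" using len by simp
    ultimately show "r \<in> Poly ` ?L" by blast
  next
    fix r :: "'a poly" assume "r \<in> Poly ` ?L"
    then obtain xs where "r = Poly xs" "length xs = k" by auto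
    moreover have "degree (Poly xs) \<le> length xs - 1"
    proof (rule degree_le, intro allI impI)
      fix i assume "length xs - 1 < i"
      thus "coeff (Poly xs) i = 0" using assms \<open>length xs = k\<close> by (simp add: nth_default_def)
    qed
    ultimately show "r \<in> {r. degree r < k}" using assms by simp
  qed
  have "card {r::'a poly. degree r < k} = card ?L" unfolding eq by (rule card_image[OF inj])
  also have "\<dots> = card (UNIV::'a set) ^ k" by (rule card_lists_length_eq) simp
  finally show ?thesis .
qed

context cset begin

abbreviation "M \<equiv> map_poly emb m"
abbreviation "k \<equiv> card K"
definition "hh = X div m"

lemma k_pos: "k \<ge> 1"
  using a_in_K K_finite by (metis One_nat_def Suc_leI card_gt_0_iff empty_iff)

lemma degree_m: "degree m = k"
  using degree_map_fe[OF emb, of m] m_def degree_prod_roots[OF K_finite, of "\<lambda>h. zeta ^ h"] by simp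

lemma m_nz: "m \<noteq> 0"
  using degree_m k_pos by auto

lemma map_X: "map_poly emb X = monom 1 n - [:emb lam:]"
  by (simp add: xn_minus_def emb)

lemma degree_X: "degree X = n"
proof -
  have "degree [:lam:] < degree (monom 1 n :: 'a poly)" using n_pos by (simp add: degree_monom_eq)
  hence "degree (monom 1 n + - [:lam:]) = degree (monom 1 n :: 'a poly)"
    by (intro degree_add_eq_left) simp
  thus ?thesis unfolding xn_minus_def by (simp only: diff_conv_add_uminus) (simp add: degree_monom_eq)
qed

lemma X_nz: "X \<noteq> 0" using degree_X n_pos by auto

lemma M_dvd_X: "M dvd map_poly emb X"
  unfolding m_def map_X
  by (rule prod_roots_dvd[OF K_finite K_inj]) (simp add: poly_monom K_root)

lemma m_dvd_X: "m dvd X"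
  using M_dvd_X map_fe_dvd[OF emb] by blast

lemma X_eq: "X = hh * m"
  using m_dvd_X by (simp add: hh_def)

lemma hh_nz: "hh \<noteq> 0" using X_eq X_nz by auto

definition "Cset = ideal_gen n lam hh"
definition "P i c = (monom 1 i * c) mod X"

lemma C_eq: "Cset = (\<lambda>r. hh * r) ` {r. degree r < k}"
proof (intro set_eqI iffI)
  fix c assume "c \<in> Cset"
  then obtain f where f: "c = (hh * f) mod X" by (auto simp: Cset_def ideal_gen_def)
  hence "c = hh * (f mod m)" by (simp add: X_eq mod_mult_mult1)
  moreover have "degree (f mod m) < k"
    using degree_mod_less[OF m_nz, of f] degree_m k_pos by auto
  ultimately show "c \<in> (\<lambda>r. hh * r) ` {r. degree r < k}" by blast
next
  fix c assume "c \<in> (\<lambda>r. hh * r) ` {r. degree r < k}"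
  then obtain r where r: "c = hh * r" "degree r < k" by auto
  have "r mod m = r" using r(2) degree_m by (simp add: mod_poly_less)
  hence "c = (hh * r) mod X" by (simp add: r X_eq mod_mult_mult1)
  thus "c \<in> Cset" by (auto simp: Cset_def ideal_gen_def)
qed

lemma card_C: "card Cset = q ^ k"
proof -
  have "inj_on (\<lambda>r. hh * r) {r. degree r < k}" using hh_nz by (auto intro: inj_onI)
  hence "card Cset = card {r::'a poly. degree r < k}" by (simp add: C_eq card_image)
  also have "\<dots> = q ^ k" using card_deg_less[OF k_pos] q_def by simp
  finally show ?thesis .
qed

lemma finite_C: "finite Cset"
proof -
  have "card {r::'a poly. degree r < k} = q ^ k" using card_deg_less[OF k_pos] q_def by simp
  moreover have "q ^ k > 0" using q_ge2 by simp
  ultimately have "card {r::'a poly. degree r < k} > 0" by simp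
  hence "finite {r::'a poly. degree r < k}" by (rule card_ge_0_finite)
  thus ?thesis unfolding C_eq by simp
qed

lemma C_red: "c \<in> Cset \<Longrightarrow> c mod X = c"
  by (auto simp: Cset_def ideal_gen_def)

lemma zero_C: "0 \<in> Cset"
  unfolding C_eq using k_pos by (auto intro!: image_eqI[where x=0])

lemma P_P: "P i (P j c) = P (i + j) c"
  unfolding P_def by (simp add: mod_mult_right_eq mult.assoc[symmetric] mult_monom add.commute)

lemma P_0: "c mod X = c \<Longrightarrow> P 0 c = c"
  by (simp add: P_def monom_0)

lemma P_mod: "P i (c mod X) = P i c"
  by (simp add: P_def mod_mult_right_eq)

lemma xn_mod: "monom 1 n mod X = [:lam:] mod X"
  by (simp add: mod_eq_dvd_iff xn_minus_def)

lemma xn_pow_mod: "(monom 1 n) ^ j mod X = [:lam ^ j:] mod X"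
proof -
  have "(monom 1 n) ^ j mod X = (monom 1 n mod X) ^ j mod X" by (simp add: power_mod)
  also have "\<dots> = ([:lam:] mod X) ^ j mod X" by (simp add: xn_mod)
  also have "\<dots> = [:lam:] ^ j mod X" by (simp add: power_mod)
  finally show ?thesis by (simp add: poly_const_pow)
qed

lemma P_N: "P (N * s) c = c mod X"
proof -
  have "monom (1::'a) (N * s) = ((monom 1 n) ^ t) ^ s"
    by (simp add: monom_power mult.commute)
  hence "monom (1::'a) (N * s) mod X = ((monom 1 n) ^ t mod X) ^ s mod X"
    by (simp add: power_mod)
  also have "\<dots> = (1 mod X) ^ s mod X" using xn_pow_mod[of t] t_props(2) by (simp add: one_pCons)
  also have "\<dots> = 1 mod X" by (simp add: power_mod)
  finally have 1: "monom (1::'a) (N * s) mod X = 1 mod X" .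
  have "P (N * s) c = ((monom 1 (N * s) mod X) * c) mod X" unfolding P_def by (simp add: mod_mult_left_eq)
  also have "\<dots> = ((1 mod X) * c) mod X" by (simp only: 1)
  also have "\<dots> = c mod X" by (simp add: mod_mult_left_eq)
  finally show ?thesis .
qed

lemma P_addN: "P (i + N * s) c = P i c"
  using P_P[of i "N * s" c] P_N[of s c] P_mod[of i c] by simp

lemma rho_iter: "c mod X = c \<Longrightarrow> (rho n lam ^^ i) c = P i c"
proof (induction i)
  case 0 thus ?case by (simp add: P_0)
next
  case (Suc i)
  have "(rho n lam ^^ Suc i) c = rho n lam (P i c)" using Suc by simp
  also have "\<dots> = P 1 (P i c)" by (simp add: rho_def P_def)
  finally show ?case by (simp add: P_P)
qed

lemma inv_lam: "lam ^ (t - 1) = inverse lam"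
proof -
  have "lam * lam ^ (t - 1) = lam ^ Suc (t - 1)" by simp
  also have "Suc (t - 1) = t" using t_props(1) by simp
  finally have "lam * lam ^ (t - 1) = 1" using t_props(2) by simp
  hence "inverse lam = lam ^ (t - 1)" by (rule inverse_unique)
  thus ?thesis by simp
qed

lemma rho_inv_eq: "rho_inv n lam c = P (N - 1) c"
proof -
  have e: "N - 1 = (n - 1) + n * (t - 1)" using t_props(1) n_pos
    by (simp add: algebra_simps diff_mult_distrib2)
  have "monom (1::'a) (N - 1) = monom 1 (n - 1) * (monom 1 n) ^ (t - 1)"
    unfolding e by (simp add: monom_power mult_monom)
  hence "monom (1::'a) (N - 1) mod X = (monom 1 (n - 1) * ((monom 1 n) ^ (t - 1) mod X)) mod X"
    by (simp add: mod_mult_right_eq)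
  also have "\<dots> = (monom 1 (n - 1) * [:inverse lam:]) mod X"
    using inv_lam by (simp add: xn_pow_mod mod_mult_right_eq)
  also have "monom 1 (n - 1) * [:inverse lam:] = monom (inverse lam) (n - 1)"
    by (simp flip: monom_0 add: mult_monom)
  finally have 1: "monom (1::'a) (N - 1) mod X = monom (inverse lam) (n - 1) mod X" .
  have "P (N - 1) c = ((monom 1 (N - 1) mod X) * c) mod X" unfolding P_def by (simp add: mod_mult_left_eq)
  also have "\<dots> = ((monom (inverse lam) (n - 1) mod X) * c) mod X" by (simp only: 1)
  also have "\<dots> = rho_inv n lam c" unfolding rho_inv_def by (simp add: mod_mult_left_eq)
  finally show ?thesis by simp
qed

lemma rho_inv_iter: "c mod X = c \<Longrightarrow> (rho_inv n lam ^^ l) c = P ((N - 1) * l) c"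
proof (induction l)
  case 0 thus ?case by (simp add: P_0)
next
  case (Suc l)
  have "(rho_inv n lam ^^ Suc l) c = rho_inv n lam ((rho_inv n lam ^^ l) c)" by simp
  also have "\<dots> = P (N - 1) ((rho_inv n lam ^^ l) c)" by (rule rho_inv_eq)
  also have "\<dots> = P (N - 1) (P ((N - 1) * l) c)" by (simp only: Suc.IH[OF Suc.prems])
  finally have "(rho_inv n lam ^^ Suc l) c = P (N - 1) (P ((N - 1) * l) c)" .
  moreover have "(N - 1) + (N - 1) * l = (N - 1) * Suc l" by simp
  ultimately show ?case by (simp only: P_P)
qed

lemma orbit_eq: "c mod X = c \<Longrightarrow> rho_orbit n lam c = range (\<lambda>i. P i c)"
proof (intro set_eqI iffI)
  fix d assume c: "c mod X = c" and "d \<in> rho_orbit n lam c"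
  then obtain j where "d = rho_pow n lam j c" by (auto simp: rho_orbit_def)
  thus "d \<in> range (\<lambda>i. P i c)"
    using c by (cases "j \<ge> 0") (auto simp: rho_pow_def rho_iter rho_inv_iter)
next
  fix d assume c: "c mod X = c" and "d \<in> range (\<lambda>i. P i c)"
  then obtain i where "d = P i c" by auto
  hence "d = rho_pow n lam (int i) c" using c by (simp add: rho_pow_def rho_iter)
  thus "d \<in> rho_orbit n lam c" by (auto simp: rho_orbit_def)
qed

end



lemma nt_dvd:
  fixes N a e :: nat
  assumes "N > 0"
  shows "N dvd a * e \<longleftrightarrow> (N div gcd a N) dvd e"
proof -
  define g where "g = gcd a N"
  have g0: "g > 0" using assms by (simp add: g_def)
  obtain a' where a': "a = g * a'" unfolding g_def by (meson gcd_dvd1 dvdE)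
  obtain D where D: "N = g * D" unfolding g_def by (meson gcd_dvd2 dvdE)
  have Dd: "N div g = D" using D g0 by simp
  have "coprime (a div g) (N div g)" using assms unfolding g_def by (intro div_gcd_coprime) simp
  hence cop: "coprime a' D" using a' D g0 by simp
  have "N dvd a * e \<longleftrightarrow> g * D dvd g * (a' * e)" using a' D by (simp add: mult.assoc)
  also have "\<dots> \<longleftrightarrow> D dvd a' * e" using g0 by simp
  also have "\<dots> \<longleftrightarrow> D dvd e" using cop by (simp add: coprime_commute coprime_dvd_mult_right_iff)
  finally show ?thesis using Dd g_def by simp
qed

context cset begin

lemma poly_M_root: "h \<in> K \<Longrightarrow> poly M (zeta ^ h) = 0"
  unfolding m_def using K_finite by (auto simp: poly_prod)

lemma M_dvd_iff:
  fixes R :: "'b poly"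
  assumes R: "R \<noteq> 0" "degree R < k"
  shows "M dvd (monom 1 e - 1) * R \<longleftrightarrow> N dvd a * e"
proof
  assume Nd: "N dvd a * e"
  have "\<forall>h\<in>K. poly (monom 1 e - 1) (zeta ^ h) = 0"
  proof
    fix h assume "h \<in> K"
    hence "zeta ^ (h * e) = 1" using Nd K_dvd_iff zeta_1_iff by blast
    thus "poly (monom 1 e - 1) (zeta ^ h) = 0" by (simp add: poly_monom power_mult)
  qed
  hence "M dvd monom 1 e - 1" unfolding m_def by (rule prod_roots_dvd[OF K_finite K_inj])
  thus "M dvd (monom 1 e - 1) * R" by (rule dvd_mult2)
next
  assume Md: "M dvd (monom 1 e - 1) * R"
  show "N dvd a * e"
  proof (rule ccontr)
    assume nd: "\<not> N dvd a * e"
    have "\<forall>h\<in>K. poly R (zeta ^ h) = 0"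
    proof
      fix h assume hK: "h \<in> K"
      have "zeta ^ (h * e) \<noteq> 1" using nd K_dvd_iff[OF hK] zeta_1_iff by blast
      hence ne: "poly (monom 1 e - 1) (zeta ^ h) \<noteq> 0" by (simp add: poly_monom power_mult)
      obtain s where "(monom 1 e - 1) * R = M * s" using Md by blast
      hence "poly (monom 1 e - 1) (zeta ^ h) * poly R (zeta ^ h) = 0"
        using poly_M_root[OF hK] by (metis poly_mult mult_zero_left)
      thus "poly R (zeta ^ h) = 0" using ne by simp
    qed
    hence "k \<le> degree R" using roots_card_le[OF R(1) K_inj] by blast
    thus False using R(2) by simp
  qed
qed

lemma C_form: "c \<in> Cset \<Longrightarrow> \<exists>r. c = hh * r \<and> degree r < k"
  unfolding C_eq by auto

lemma stab: assumes c: "c \<in> Cset" "c \<noteq> 0"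
  shows "P e c = c \<longleftrightarrow> N dvd a * e"
proof -
  obtain r where r: "c = hh * r" "degree r < k" using C_form[OF c(1)] by blast
  have r0: "r \<noteq> 0" using r c(2) by auto
  have "P e c = c \<longleftrightarrow> (monom 1 e * c) mod X = c mod X" using C_red[OF c(1)] by (simp add: P_def)
  also have "\<dots> \<longleftrightarrow> X dvd monom 1 e * c - c" by (rule mod_eq_dvd_iff)
  also have "monom 1 e * c - c = ((monom 1 e - 1) * r) * hh" by (simp add: r algebra_simps)
  also have "X = m * hh" by (simp add: X_eq mult.commute)
  also have "m * hh dvd ((monom 1 e - 1) * r) * hh \<longleftrightarrow> m dvd (monom 1 e - 1) * r"
    using hh_nz by simp
  also have "\<dots> \<longleftrightarrow> M dvd map_poly emb ((monom 1 e - 1) * r)" using map_fe_dvd[OF emb] by simp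
  also have "map_poly emb ((monom 1 e - 1) * r) = (monom 1 e - 1) * map_poly emb r"
    using emb by simp
  also have "M dvd (monom 1 e - 1) * map_poly emb r \<longleftrightarrow> N dvd a * e"
    by (rule M_dvd_iff) (use r r0 emb in simp_all)
  finally show ?thesis .
qed

definition "Dd = N div gcd a N"

lemma Dd_pos: "Dd > 0"
  unfolding Dd_def using N_pos by (simp add: div_greater_zero_iff gcd_le2_nat)

lemma Dd_g: "Dd * gcd a n = N"
proof -
  have "gcd a N = gcd a n" using coprime_at by (simp add: gcd_mult_right_left_cancel)
  thus ?thesis unfolding Dd_def by (metis dvd_div_mult_self gcd_dvd2)
qed

lemma stab_D: "c \<in> Cset \<Longrightarrow> c \<noteq> 0 \<Longrightarrow> P e c = c \<longleftrightarrow> Dd dvd e"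
  using stab nt_dvd[OF N_pos] unfolding Dd_def by blast

lemma P_back: "c mod X = c \<Longrightarrow> P (N * i - i) (P i c) = c"
proof -
  assume c: "c mod X = c"
  have "i \<le> N * i" using N_pos by simp
  hence "N * i - i + i = N * i" by simp
  hence "P (N * i - i) (P i c) = P (N * i) c" by (simp add: P_P)
  also have "\<dots> = c" using P_N c by simp
  finally show ?thesis .
qed

lemma P_diff: assumes c: "c mod X = c" and ij: "i \<le> j" and eq: "P i c = P j c"
  shows "P (j - i) c = c"
proof -
  have "c = P (N * i - i) (P j c)" using P_back[OF c, of i] eq by simp
  also have "\<dots> = P (N * i - i + j) c" by (simp add: P_P)
  also have "N * i - i + j = (j - i) + N * i" using ij N_pos by simp
  finally show ?thesis using P_addN by simp
qed

lemma P_in_C: "c \<in> Cset \<Longrightarrow> P i c \<in> Cset"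
proof -
  assume "c \<in> Cset"
  then obtain f where f: "c = (hh * f) mod X" by (auto simp: Cset_def ideal_gen_def)
  have "P i c = (hh * (monom 1 i * f)) mod X" unfolding f P_def
    by (simp add: mod_mult_right_eq mult.left_commute)
  thus ?thesis by (auto simp: Cset_def ideal_gen_def)
qed

lemma P_nz: "c \<in> Cset \<Longrightarrow> c \<noteq> 0 \<Longrightarrow> P i c \<noteq> 0"
  using P_back[OF C_red, of c i] by (auto simp: P_def)

lemma orbit_card: assumes c: "c \<in> Cset" "c \<noteq> 0"
  shows "card (range (\<lambda>i. P i c)) = Dd"
proof -
  have red: "c mod X = c" using C_red c by simp
  have rng: "range (\<lambda>i. P i c) = (\<lambda>i. P i c) ` {..<Dd}"
  proof (intro set_eqI iffI)
    fix d assume "d \<in> range (\<lambda>i. P i c)"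
    then obtain i where d: "d = P i c" by auto
    have "P (Dd * (i div Dd)) c = c" using stab_D[OF c] by simp
    hence "d = P (i mod Dd) c" using P_P[of "i mod Dd" "Dd * (i div Dd)" c] d by simp
    thus "d \<in> (\<lambda>i. P i c) ` {..<Dd}" using Dd_pos by auto
  qed auto
  have "inj_on (\<lambda>i. P i c) {..<Dd}"
  proof -
    have *: "i = j" if "i < Dd" "j < Dd" "i \<le> j" "P i c = P j c" for i j
    proof -
      have "P (j - i) c = c" using P_diff[OF red that(3,4)] .
      hence "Dd dvd j - i" using stab_D[OF c] by simp
      moreover have "j - i < Dd" using that by simp
      ultimately have "j - i = 0" by (metis dvd_imp_le not_less neq0_conv)
      thus ?thesis using that(3) by simp
    qed
    show ?thesis
    proof (rule inj_onI)
      fix i j assume "i \<in> {..<Dd}" "j \<in> {..<Dd}" "P i c = P j c"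
      thus "i = j" using *[of i j] *[of j i] by (cases "i \<le> j") auto
    qed
  qed
  thus ?thesis unfolding rng by (simp add: card_image)
qed

lemma orbit_same: assumes c: "c mod X = c" and d: "d \<in> range (\<lambda>i. P i c)"
  shows "range (\<lambda>i. P i d) = range (\<lambda>i. P i c)"
proof -
  obtain i where di: "d = P i c" using d by auto
  show ?thesis
  proof (intro set_eqI iffI)
    fix x assume "x \<in> range (\<lambda>i. P i d)"
    then obtain j where "x = P j d" by auto
    thus "x \<in> range (\<lambda>i. P i c)" by (simp add: di P_P)
  next
    fix x assume "x \<in> range (\<lambda>i. P i c)"
    then obtain l where x: "x = P l c" by auto
    have "i \<le> N * i" using N_pos by simp
    hence "l + N * i - i + i = l + N * i" by linarith
    hence "P (l + N * i - i) d = P (l + N * i) c" by (simp add: di P_P)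
    also have "\<dots> = x" by (simp add: x P_addN)
    finally show "x \<in> range (\<lambda>i. P i d)" by (metis rangeI)
  qed
qed

end



context cset begin

lemma red_deg: "c mod X = c \<Longrightarrow> degree c < n"
  using degree_mod_less[OF X_nz, of c] degree_X n_pos by (metis degree_0 neq0_conv le_less_trans le_refl less_one not_less)

lemma rho1_eq: assumes c: "c mod X = c"
  defines "Q \<equiv> monom 1 1 * c - smult (coeff c (n - 1)) X"
  shows "P 1 c = Q"
    and "coeff Q j = (if j < n then (if j = 0 then lam * coeff c (n - 1) else coeff c (j - 1)) else 0)"
proof -
  have dc: "degree c < n" using red_deg[OF c] .
  have cX: "coeff X j = (if j = n then 1 else 0) - (if j = 0 then lam else 0)" for j
    by (simp add: xn_minus_def coeff_monom coeff_pCons split: nat.splits)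
  show co: "coeff Q j = (if j < n then (if j = 0 then lam * coeff c (n - 1) else coeff c (j - 1)) else 0)" for j
  proof -
    have "coeff Q j = (if j < 1 then 0 else coeff c (j - 1)) - coeff c (n - 1) * coeff X j"
      by (simp add: Q_def coeff_monom_mult)
    also have "\<dots> = (if j < n then (if j = 0 then lam * coeff c (n - 1) else coeff c (j - 1)) else 0)"
    proof (cases "j < n")
      case True thus ?thesis using n_pos by (auto simp: cX)
    next
      case False
      show ?thesis
      proof (cases "j = n")
        case True thus ?thesis using n_pos by (auto simp: cX)
      next
        case False
        hence "j - 1 > degree c" using \<open>\<not> j < n\<close> dc by simp
        thus ?thesis using False \<open>\<not> j < n\<close> n_pos by (auto simp: cX coeff_eq_0)
      qed
    qed
    finally show ?thesis .
  qed
  have "degree Q \<le> n - 1"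
    by (rule degree_le) (use co n_pos in auto)
  hence "degree Q < degree X" using degree_X n_pos by simp
  hence "Q mod X = Q" by (rule mod_poly_less)
  moreover have "Q mod X = (monom 1 1 * c) mod X"
    unfolding Q_def mod_eq_dvd_iff by (simp add: dvd_smult)
  ultimately show "P 1 c = Q" by (simp add: P_def)
qed

lemma hweight_P1: assumes c: "c mod X = c" shows "hweight (P 1 c) = hweight c"
proof -
  define S where "S = {i. coeff c i \<noteq> 0}"
  define S' where "S' = {i. coeff (P 1 c) i \<noteq> 0}"
  define \<sigma> where "\<sigma> = (\<lambda>i::nat. if i = n - 1 then 0 else i + 1)"
  have dc: "degree c < n" using red_deg[OF c] .
  have Sn: "S \<subseteq> {..<n}" unfolding S_def using dc by (auto intro: ccontr simp: coeff_eq_0 not_less)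
  have co: "coeff (P 1 c) j = (if j < n then (if j = 0 then lam * coeff c (n - 1) else coeff c (j - 1)) else 0)" for j
    using rho1_eq[OF c] by simp
  have img: "S' = \<sigma> ` S"
  proof (intro set_eqI iffI)
    fix j assume "j \<in> S'"
    hence j: "j < n" "(if j = 0 then lam * coeff c (n - 1) else coeff c (j - 1)) \<noteq> 0"
      unfolding S'_def co by (auto split: if_splits)
    show "j \<in> \<sigma> ` S"
    proof (cases "j = 0")
      case True
      hence "n - 1 \<in> S" using j by (simp add: S_def)
      thus ?thesis using True by (auto simp: \<sigma>_def intro!: image_eqI[where x="n - 1"])
    next
      case False
      hence "j - 1 \<in> S" "j - 1 \<noteq> n - 1" using j by (auto simp: S_def)
      moreover have "\<sigma> (j - 1) = j" using False j by (auto simp: \<sigma>_def)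
      ultimately show ?thesis by (metis imageI)
    qed
  next
    fix j assume "j \<in> \<sigma> ` S"
    then obtain i where i: "i \<in> S" "j = \<sigma> i" by auto
    have "i < n" using i Sn by auto
    show "j \<in> S'"
    proof (cases "i = n - 1")
      case True
      hence "j = 0" using i by (simp add: \<sigma>_def)
      thus ?thesis using co[of 0] True i lam_nz n_pos by (simp add: S'_def S_def)
    next
      case False
      hence "i + 1 < n" using \<open>i < n\<close> by simp
      moreover have "j = i + 1" using i False by (simp add: \<sigma>_def)
      ultimately show ?thesis using co[of "i + 1"] i by (simp add: S'_def S_def)
    qed
  qed
  have "inj_on \<sigma> {..<n}" by (auto simp: \<sigma>_def inj_on_def split: if_splits)
  hence "inj_on \<sigma> S" using Sn by (rule inj_on_subset)
  hence "card S' = card S" unfolding img by (rule card_image)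
  thus ?thesis by (simp add: hweight_def S_def S'_def)
qed

lemma hweight_P: assumes c: "c mod X = c" shows "hweight (P i c) = hweight c"
proof (induction i)
  case 0 thus ?case using c by (simp add: P_0)
next
  case (Suc i)
  have "P (Suc i) c = P 1 (P i c)" by (simp add: P_P)
  moreover have "(P i c) mod X = P i c" by (simp add: P_def)
  ultimately show ?case using hweight_P1 Suc by simp
qed

end



lemma real_aux: "(d::real) > 0 \<Longrightarrow> u = d * x \<Longrightarrow> nn = d * g \<Longrightarrow> g > 0 \<Longrightarrow> x = u * g / nn"
  by (simp add: field_simps)

context cset begin

lemma main:
  "real (num_rho_orbits n lam (Cset - {0})) = real (q ^ k - 1) * real (gcd a n) / real N \<and>
   card (hweight ` (Cset - {0})) \<le> num_rho_orbits n lam (Cset - {0}) \<and>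
   (card (hweight ` (Cset - {0})) = num_rho_orbits n lam (Cset - {0}) \<longleftrightarrow>
     (\<forall>c1 \<in> Cset - {0}. \<forall>c2 \<in> Cset - {0}. hweight c1 = hweight c2 \<longrightarrow>
        (\<exists>j::int. rho_pow n lam j c1 = c2)))"
proof -
  define Cn where "Cn = Cset - {0}"
  define Orb where "Orb = rho_orbit n lam"
  have finCn: "finite Cn" using finite_C by (simp add: Cn_def)
  have hO: "Orb c = range (\<lambda>i. P i c)" if "c \<in> Cn" for c
    using that C_red orbit_eq by (simp add: Orb_def Cn_def)
  have Osub: "Orb c \<subseteq> Cn" if "c \<in> Cn" for c
    using that P_in_C P_nz by (auto simp: hO Cn_def)
  have cO: "c \<in> Orb c" if "c \<in> Cn" for c
    using that P_0[OF C_red] by (auto simp: hO Cn_def intro!: range_eqI[where x=0])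
  have cardO: "card (Orb c) = Dd" if "c \<in> Cn" for c
    using that orbit_card by (simp add: hO Cn_def)
  have same: "Orb d = Orb c" if "c \<in> Cn" "d \<in> Orb c" for c d
  proof -
    have "d \<in> Cn" using Osub that by auto
    thus ?thesis using that orbit_same[OF C_red] hO by (simp add: Cn_def)
  qed
  have Un: "\<Union> (Orb ` Cn) = Cn" using Osub cO by blast
  have disj: "\<forall>c1\<in>Orb ` Cn. \<forall>c2\<in>Orb ` Cn. c1 \<noteq> c2 \<longrightarrow> c1 \<inter> c2 = {}"
    using same by blast
  have "Dd * card (Orb ` Cn) = card (\<Union> (Orb ` Cn))"
  proof (rule card_partition)
    show "finite (Orb ` Cn)" using finCn by simp
    show "finite (\<Union> (Orb ` Cn))" using finCn Un by simp
    show "card c = Dd" if "c \<in> Orb ` Cn" for c using that cardO by auto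
    show "c1 \<inter> c2 = {}" if "c1 \<in> Orb ` Cn" "c2 \<in> Orb ` Cn" "c1 \<noteq> c2" for c1 c2
      using disj that by blast
  qed
  moreover have "card Cn = q ^ k - 1" unfolding Cn_def using card_C zero_C by (simp add: card_Diff_singleton)
  ultimately have part: "Dd * card (Orb ` Cn) = q ^ k - 1" unfolding Un by simp
  have num: "num_rho_orbits n lam Cn = card (Orb ` Cn)" by (simp add: num_rho_orbits_def Orb_def)
  have eq1: "real (card (Orb ` Cn)) = real (q ^ k - 1) * real (gcd a n) / real N"
  proof -
    have "real N = real Dd * real (gcd a n)" using arg_cong[OF Dd_g, of real] by simp
    moreover have "real (q ^ k - 1) = real Dd * real (card (Orb ` Cn))" using arg_cong[OF part, of real] by simp
    moreover have "real (gcd a n) > 0" using n_pos by simp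
    ultimately show ?thesis using Dd_pos by (intro real_aux) simp_all
  qed
  define W where "W S = hweight (SOME x. x \<in> S)" for S :: "'a poly set"
  have WO: "W (Orb c) = hweight c" if cn: "c \<in> Cn" for c
  proof -
    have "(SOME x. x \<in> Orb c) \<in> Orb c" using cO[OF cn] by (rule someI)
    then obtain i where "(SOME x. x \<in> Orb c) = P i c" using hO[OF cn] by auto
    thus ?thesis using hweight_P[OF C_red] cn by (simp add: W_def Cn_def)
  qed
  have "hweight ` Cn = (\<lambda>c. W (Orb c)) ` Cn"
    by (rule image_cong[OF refl]) (simp add: WO)
  hence himg: "hweight ` Cn = W ` (Orb ` Cn)" by (simp add: image_image)
  have le: "card (hweight ` Cn) \<le> card (Orb ` Cn)"
    unfolding himg using finCn by (simp add: card_image_le)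
  have "card (hweight ` Cn) = card (Orb ` Cn) \<longleftrightarrow> inj_on W (Orb ` Cn)"
    unfolding himg using finCn by (simp add: inj_on_iff_eq_card)
  also have "\<dots> \<longleftrightarrow> (\<forall>c1 \<in> Cn. \<forall>c2 \<in> Cn. hweight c1 = hweight c2 \<longrightarrow>
        (\<exists>j::int. rho_pow n lam j c1 = c2))"
  proof
    assume inj: "inj_on W (Orb ` Cn)"
    show "\<forall>c1 \<in> Cn. \<forall>c2 \<in> Cn. hweight c1 = hweight c2 \<longrightarrow> (\<exists>j::int. rho_pow n lam j c1 = c2)"
    proof (intro ballI impI)
      fix c1 c2 assume c: "c1 \<in> Cn" "c2 \<in> Cn" "hweight c1 = hweight c2"
      hence "W (Orb c1) = W (Orb c2)" using WO by simp
      hence "Orb c1 = Orb c2" by (rule inj_onD[OF inj]) (use c in auto)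
      hence "c2 \<in> Orb c1" using cO[OF c(2)] by simp
      thus "\<exists>j::int. rho_pow n lam j c1 = c2" by (auto simp: Orb_def rho_orbit_def)
    qed
  next
    assume H: "\<forall>c1 \<in> Cn. \<forall>c2 \<in> Cn. hweight c1 = hweight c2 \<longrightarrow> (\<exists>j::int. rho_pow n lam j c1 = c2)"
    show "inj_on W (Orb ` Cn)"
    proof (rule inj_onI)
      fix A B assume "A \<in> Orb ` Cn" "B \<in> Orb ` Cn" "W A = W B"
      then obtain c1 c2 where c: "c1 \<in> Cn" "c2 \<in> Cn" "A = Orb c1" "B = Orb c2" "W (Orb c1) = W (Orb c2)" by auto
      hence "hweight c1 = hweight c2" using WO by simp
      then obtain j where "rho_pow n lam j c1 = c2" using H c by blast
      hence "c2 \<in> Orb c1" by (auto simp: Orb_def rho_orbit_def)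
      hence "Orb c2 = Orb c1" by (rule same[OF c(1)])
      thus "A = B" using c(3,4) by simp
    qed
  qed
  finally have iff: "card (hweight ` Cn) = card (Orb ` Cn) \<longleftrightarrow> (\<forall>c1 \<in> Cn. \<forall>c2 \<in> Cn. hweight c1 = hweight c2 \<longrightarrow>
        (\<exists>j::int. rho_pow n lam j c1 = c2))" .
  show ?thesis unfolding Cn_def[symmetric] num using eq1 le iff by blast
qed

end


theorem lemma2:
  fixes lam :: "'a::{finite,field}"
    and emb :: "'a \<Rightarrow> 'b::field"
    and zeta :: 'b
    and n t \<alpha> :: nat
    and m :: "'a poly"
  defines "q \<equiv> card (UNIV :: 'a set)"
  defines "C \<equiv> ideal_gen n lam (xn_minus n lam div m)"
  defines "k \<equiv> card (cyc_coset q (t * n) (1 + t * \<alpha>))"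
  assumes n_pos: "n \<ge> 1"
    and coprime_nq: "coprime n q"
    and lam_nz: "lam \<noteq> 0"
    and t_def: "t = mult_order lam"
    and emb: "field_embedding emb"
    and zeta_prim: "zeta ^ (t * n) = 1" "\<forall>j. 0 < j \<and> j < t * n \<longrightarrow> zeta ^ j \<noteq> 1"
    and zeta_n: "zeta ^ n = emb lam"
    and alpha_lt: "\<alpha> < n"
    and alpha_min: "\<forall>\<beta> < \<alpha>. (1 + t * \<beta>) \<notin> cyc_coset q (t * n) (1 + t * \<alpha>)"
    and m_def: "map_poly emb m = (\<Prod>h\<in>cyc_coset q (t * n) (1 + t * \<alpha>). [:- (zeta ^ h), 1:])"
  shows "real (num_rho_orbits n lam (C - {0}))
           = real (q ^ k - 1) * real (gcd (1 + t * \<alpha>) n) / real (t * n) \<and>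
         card (hweight ` (C - {0})) \<le> num_rho_orbits n lam (C - {0}) \<and>
         (card (hweight ` (C - {0})) = num_rho_orbits n lam (C - {0}) \<longleftrightarrow>
           (\<forall>c1 \<in> C - {0}. \<forall>c2 \<in> C - {0}. hweight c1 = hweight c2 \<longrightarrow>
              (\<exists>j::int. rho_pow n lam j c1 = c2)))"
proof -
  interpret L: cset lam emb zeta n t \<alpha> m q
    by unfold_locales (use n_pos coprime_nq lam_nz t_def emb zeta_prim zeta_n alpha_lt m_def in \<open>simp_all add: q_def\<close>)
  have CC: "C = L.Cset" unfolding C_def L.Cset_def L.hh_def ..
  show ?thesis using L.main unfolding k_def CC .
qed

end
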